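(* Let $\sigma_1,\sigma_2\subset\mathbb{Q}^n$ be rational polyhedral cones and suppose there is a vector $\mathbf{a}\in\sigma_1\cap\sigma_2$ such that $\mathrm{span}_{\mathbb{Q}}(\sigma_1)\cap\mathrm{span}_{\mathbb{Q}}(\sigma_2)=\mathbb{Q}\mathbf{a}$. Let $\sigma_1\oplus\sigma_2:=\mathrm{pos}_{\mathbb{Q}}(\sigma_1\cup\sigma_2)$. Then $\sigma_1$ and $\sigma_2$ are both strongly convex if and only if $\sigma_1\oplus\sigma_2$ is strongly convex.
   Context: For $B\subset\mathbb{Q}^n$, $\mathrm{span}_{\mathbb{Q}}(B)=\{\sum q_i\mathbf{b}_i: q_i\in\mathbb{Q},\mathbf{b}_i\in B\}$ (finite sums) and $\mathrm{pos}_{\mathbb{Q}}(B)=\{\sum q_i\mathbf{b}_i: q_i\in\mathbb{Q}_{\ge 0},\mathbf{b}_i\in B\}$. A rational polyhedral cone is $\mathrm{pos}_{\mathbb{Q}}(B)$ for a finite $B\subset\mathbb{Q}^n$. A cone $\sigma$ is strongly convex if $\sigma\cap(-\sigma)=\{\mathbf{0}\}$. *)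

theory Defs
  imports "HOL-Analysis.Finite_Cartesian_Product"
begin

definition qspan :: "(rat ^ 'n) set \<Rightarrow> (rat ^ 'n) set" where
  "qspan B = {x. \<exists>S c. finite S \<and> S \<subseteq> B \<and> x = (\<Sum>b\<in>S. c b *s b)}"

definition qpos :: "(rat ^ 'n) set \<Rightarrow> (rat ^ 'n) set" where
  "qpos B = {x. \<exists>S c. finite S \<and> S \<subseteq> B \<and> (\<forall>b\<in>S. c b \<ge> 0) \<and> x = (\<Sum>b\<in>S. c b *s b)}"

definition rational_polyhedral_cone :: "(rat ^ 'n) set \<Rightarrow> bool" where
  "rational_polyhedral_cone \<sigma> \<longleftrightarrow> (\<exists>B. finite B \<and> \<sigma> = qpos B)"

definition strongly_convex :: "(rat ^ 'n) set \<Rightarrow> bool" where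
  "strongly_convex \<sigma> \<longleftrightarrow> \<sigma> \<inter> uminus ` \<sigma> = {0}"

end

theory Submission
  imports Defs
begin

definition iscone :: "(rat ^ 'n) set \<Rightarrow> bool" where
  "iscone \<sigma> \<longleftrightarrow> 0 \<in> \<sigma> \<and> (\<forall>x\<in>\<sigma>. \<forall>y\<in>\<sigma>. x + y \<in> \<sigma>) \<and> (\<forall>x\<in>\<sigma>. \<forall>c. c \<ge> 0 \<longrightarrow> c *s x \<in> \<sigma>)"

lemma smult_sum: "(q::rat) *s (\<Sum>b\<in>S. f b) = (\<Sum>b\<in>S. q *s f b)"
  by (simp add: vec_eq_iff sum_distrib_left)

lemma cone_sum:
  assumes "iscone \<sigma>" "finite S" "S \<subseteq> \<sigma>" "\<forall>b\<in>S. c b \<ge> 0"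
  shows "(\<Sum>b\<in>S. c b *s b) \<in> \<sigma>"
  using assms(2,3,4)
proof (induction S rule: finite_induct)
  case empty then show ?case using assms(1) by (simp add: iscone_def)
next
  case (insert x F)
  then show ?case using assms(1) unfolding iscone_def by simp
qed

lemma qpos_sub: "B \<subseteq> qpos B"
proof
  fix x assume "x \<in> B"
  then show "x \<in> qpos B" unfolding qpos_def
    by (intro CollectI exI[of _ "{x}"] exI[of _ "\<lambda>_. 1"]) simp
qed

lemma qpos_cone: "iscone (qpos B)"
  unfolding iscone_def
proof (intro conjI ballI allI impI)
  show "0 \<in> qpos B" unfolding qpos_def
    by (intro CollectI exI[of _ "{}"]) simp
next
  fix x y assume "x \<in> qpos B" "y \<in> qpos B"
  then obtain S c T d where S: "finite S" "S \<subseteq> B" "\<forall>b\<in>S. c b \<ge> 0" "x = (\<Sum>b\<in>S. c b *s b)"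
    and T: "finite T" "T \<subseteq> B" "\<forall>b\<in>T. d b \<ge> 0" "y = (\<Sum>b\<in>T. d b *s b)"
    unfolding qpos_def by blast
  define e where "e b = (if b \<in> S then c b else 0) + (if b \<in> T then d b else 0)" for b
  have "(\<Sum>b\<in>S \<union> T. e b *s b) = (\<Sum>b\<in>S \<union> T. (if b \<in> S then c b else 0) *s b) + (\<Sum>b\<in>S \<union> T. (if b \<in> T then d b else 0) *s b)"
    unfolding e_def by (simp add: vector_sadd_rdistrib sum.distrib)
  also have "(\<Sum>b\<in>S \<union> T. (if b \<in> S then c b else 0) *s b) = (\<Sum>b\<in>S. c b *s b)"
    by (rule sum.mono_neutral_cong_right) (use S T in auto)
  also have "(\<Sum>b\<in>S \<union> T. (if b \<in> T then d b else 0) *s b) = (\<Sum>b\<in>T. d b *s b)"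
    by (rule sum.mono_neutral_cong_right) (use S T in auto)
  finally have "x + y = (\<Sum>b\<in>S \<union> T. e b *s b)" using S T by simp
  moreover have "\<forall>b\<in>S \<union> T. e b \<ge> 0" using S T unfolding e_def by auto
  ultimately show "x + y \<in> qpos B" unfolding qpos_def using S T
    by (intro CollectI exI[of _ "S \<union> T"] exI[of _ e]) auto
next
  fix x and q :: rat assume "x \<in> qpos B" "q \<ge> 0"
  then obtain S c where S: "finite S" "S \<subseteq> B" "\<forall>b\<in>S. c b \<ge> 0" "x = (\<Sum>b\<in>S. c b *s b)"
    unfolding qpos_def by blast
  have "q *s x = (\<Sum>b\<in>S. (q * c b) *s b)" using S by (simp add: smult_sum vector_smult_assoc)
  then show "q *s x \<in> qpos B" unfolding qpos_def using S \<open>q \<ge> 0\<close>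
    by (intro CollectI exI[of _ S] exI[of _ "\<lambda>b. q * c b"]) auto
qed

lemma qspan_smult: "y \<in> \<sigma> \<Longrightarrow> q *s y \<in> qspan \<sigma>"
  unfolding qspan_def by (intro CollectI exI[of _ "{y}"] exI[of _ "\<lambda>_. q"]) simp

lemma pointed:
  assumes "strongly_convex \<sigma>" "u \<in> \<sigma>" "v \<in> \<sigma>" "u + v = 0"
  shows "u = 0"
proof -
  have "u = - v" using assms(4) by (simp add: eq_neg_iff_add_eq_0)
  then have "u \<in> uminus ` \<sigma>" using assms(3) by blast
  then show ?thesis using assms(1,2) unfolding strongly_convex_def by blast
qed

lemma qpos_union_split:
  assumes "iscone \<sigma>1" "iscone \<sigma>2" "x \<in> qpos (\<sigma>1 \<union> \<sigma>2)"
  shows "\<exists>u1\<in>\<sigma>1. \<exists>u2\<in>\<sigma>2. x = u1 + u2"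
proof -
  obtain S c where S: "finite S" "S \<subseteq> \<sigma>1 \<union> \<sigma>2" "\<forall>b\<in>S. c b \<ge> 0" "x = (\<Sum>b\<in>S. c b *s b)"
    using assms(3) unfolding qpos_def by blast
  have "x = (\<Sum>b\<in>S \<inter> \<sigma>1. c b *s b) + (\<Sum>b\<in>S - \<sigma>1. c b *s b)"
    unfolding S(4) by (rule sum.Int_Diff[OF S(1)])
  moreover have "(\<Sum>b\<in>S \<inter> \<sigma>1. c b *s b) \<in> \<sigma>1"
    by (rule cone_sum) (use assms S in auto)
  moreover have "(\<Sum>b\<in>S - \<sigma>1. c b *s b) \<in> \<sigma>2"
    by (rule cone_sum) (use assms S in auto)
  ultimately show ?thesis by blast
qed

lemma aux1: "(x::rat^'n) = u1 + u2 \<Longrightarrow> x = - y \<Longrightarrow> y = v1 + v2 \<Longrightarrow> u1 + v1 = (-1) *s (u2 + v2)"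
proof -
  assume h: "(x::rat^'n) = u1 + u2" "x = - y" "y = v1 + v2"
  have "u1 + v1 + (u2 + v2) = (u1 + u2) + (v1 + v2)" by (simp add: algebra_simps)
  also have "\<dots> = 0" proof -
    have "u1 + u2 = -(v1 + v2)" using h by simp
    then show ?thesis by (simp only: eq_neg_iff_add_eq_0)
  qed
  finally have "u1 + v1 = -(u2 + v2)" by (simp only: eq_neg_iff_add_eq_0)
  then show ?thesis by (simp only: vector_sneg_minus1[symmetric])
qed
lemma aux2: "(u1 + v1::rat^'n) = (-1) *s (u2 + v2) \<Longrightarrow> u1 + v1 = q *s a \<Longrightarrow>  u2 + (v2 + q *s a) = 0"
proof -
  assume h: "(u1 + v1::rat^'n) = (-1) *s (u2 + v2)" "u1 + v1 = q *s a"
  have "u2 + (v2 + q *s a) = (u2 + v2) + (u1 + v1)" using h(2) by (simp add: algebra_simps)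
  also have "\<dots> = 0" using h(1) by (simp add: vector_sneg_minus1[symmetric])
  finally show ?thesis .
qed
lemma aux3: "(u1 + v1::rat^'n) = q *s a \<Longrightarrow> u1 + (v1 + (-q) *s a) = 0"
proof -
  assume h: "(u1 + v1::rat^'n) = q *s a"
  have "u1 + (v1 + (-q) *s a) = (u1 + v1) - q *s a" by (simp add: vector_smult_lneg algebra_simps)
  then show ?thesis using h by simp
qed

theorem proposition2p2:
  fixes \<sigma>1 \<sigma>2 :: "(rat ^ 'n) set" and a :: "rat ^ 'n"
  assumes "rational_polyhedral_cone \<sigma>1" and "rational_polyhedral_cone \<sigma>2"
    and "a \<in> \<sigma>1 \<inter> \<sigma>2"
    and "qspan \<sigma>1 \<inter> qspan \<sigma>2 = {q *s a | q. True}"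
  shows "(strongly_convex \<sigma>1 \<and> strongly_convex \<sigma>2) \<longleftrightarrow> strongly_convex (qpos (\<sigma>1 \<union> \<sigma>2))"
proof -
  have c1: "iscone \<sigma>1" using assms(1) qpos_cone unfolding rational_polyhedral_cone_def by blast
  have c2: "iscone \<sigma>2" using assms(2) qpos_cone unfolding rational_polyhedral_cone_def by blast
  have z1: "0 \<in> \<sigma>1" and z2: "0 \<in> \<sigma>2" using c1 c2 unfolding iscone_def by auto
  have sub: "\<sigma>1 \<union> \<sigma>2 \<subseteq> qpos (\<sigma>1 \<union> \<sigma>2)" by (rule qpos_sub)
  have z: "0 \<in> qpos (\<sigma>1 \<union> \<sigma>2)" using z1 sub by blast
  show ?thesis
  proof
    assume "strongly_convex (qpos (\<sigma>1 \<union> \<sigma>2))"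
    then have H: "qpos (\<sigma>1 \<union> \<sigma>2) \<inter> uminus ` qpos (\<sigma>1 \<union> \<sigma>2) = {0}"
      unfolding strongly_convex_def .
    have "\<sigma>1 \<inter> uminus ` \<sigma>1 = {0}"
    proof
      show "\<sigma>1 \<inter> uminus ` \<sigma>1 \<subseteq> {0}" using H sub by blast
      show "{0} \<subseteq> \<sigma>1 \<inter> uminus ` \<sigma>1" using z1 by (simp add: image_iff)
    qed
    moreover have "\<sigma>2 \<inter> uminus ` \<sigma>2 = {0}"
    proof
      show "\<sigma>2 \<inter> uminus ` \<sigma>2 \<subseteq> {0}" using H sub by blast
      show "{0} \<subseteq> \<sigma>2 \<inter> uminus ` \<sigma>2" using z2 by (simp add: image_iff)
    qed
    ultimately show "strongly_convex \<sigma>1 \<and> strongly_convex \<sigma>2" unfolding strongly_convex_def by blast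
  next
    assume "strongly_convex \<sigma>1 \<and> strongly_convex \<sigma>2"
    then have s1: "strongly_convex \<sigma>1" and s2: "strongly_convex \<sigma>2" by auto
    have "qpos (\<sigma>1 \<union> \<sigma>2) \<inter> uminus ` qpos (\<sigma>1 \<union> \<sigma>2) \<subseteq> {0}"
    proof
      fix x assume "x \<in> qpos (\<sigma>1 \<union> \<sigma>2) \<inter> uminus ` qpos (\<sigma>1 \<union> \<sigma>2)"
      then obtain y where x: "x \<in> qpos (\<sigma>1 \<union> \<sigma>2)" and y: "y \<in> qpos (\<sigma>1 \<union> \<sigma>2)" "x = - y" by blast
      obtain u1 u2 where u: "u1 \<in> \<sigma>1" "u2 \<in> \<sigma>2" "x = u1 + u2" using qpos_union_split[OF c1 c2 x] by blast
      obtain v1 v2 where v: "v1 \<in> \<sigma>1" "v2 \<in> \<sigma>2" "y = v1 + v2" using qpos_union_split[OF c1 c2 y(1)] by blast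
      define w where "w = u1 + v1"
      have w1: "w \<in> \<sigma>1" using c1 u v unfolding iscone_def w_def by blast
      have uv2: "u2 + v2 \<in> \<sigma>2" using c2 u v unfolding iscone_def by blast
      have wdef2: "w = (-1) *s (u2 + v2)" using u(3) y(2) v(3) unfolding w_def
        by (rule aux1)
      have "w \<in> qspan \<sigma>1" using qspan_smult[OF w1, of 1] by simp
      moreover have "w \<in> qspan \<sigma>2" using qspan_smult[OF uv2] wdef2 by simp
      ultimately obtain q where q: "w = q *s a" using assms(4) by blast
      have a1: "a \<in> \<sigma>1" and a2: "a \<in> \<sigma>2" using assms(3) by auto
      show "x \<in> {0}"
      proof (cases "q \<ge> 0")
        case True
        have qa: "q *s a \<in> \<sigma>2" using c2 a2 True unfolding iscone_def by blast
        have "v2 + q *s a \<in> \<sigma>2" using c2 qa v unfolding iscone_def by blast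
        moreover have "u2 + (v2 + q *s a) = 0" using wdef2 q unfolding w_def by (rule aux2)
        ultimately have "u2 = 0" using pointed[OF s2 u(2)] by blast
        moreover have "u2 + v2 + q *s a = 0" using \<open>u2 + (v2 + q *s a) = 0\<close> by (simp add: add.assoc)
        ultimately have "v2 + q *s a = 0" by simp
        then have "v2 = 0" using pointed[OF s2 v(2) qa] by blast
        with \<open>u2 = 0\<close> have "w = 0" using wdef2 by simp
        then have "u1 = 0" using pointed[OF s1 u(1) v(1)] unfolding w_def by blast
        then show ?thesis using u \<open>u2 = 0\<close> by simp
      next
        case False
        have qa: "(-q) *s a \<in> \<sigma>1" using c1 a1 False unfolding iscone_def by auto
        have "v1 + (-q) *s a \<in> \<sigma>1" using c1 qa v unfolding iscone_def by blast
        moreover have "u1 + (v1 + (-q) *s a) = 0" using q unfolding w_def by (rule aux3)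
        ultimately have "u1 = 0" using pointed[OF s1 u(1)] by blast
        have "u2 + v2 = 0"
        proof -
          have "w = 0" using \<open>u1 = 0\<close> \<open>u1 + (v1 + (-q) *s a) = 0\<close> pointed[OF s1 v(1) qa] q w_def by simp
          then have "-(u2 + v2) = 0" using wdef2 by (simp only: vector_sneg_minus1[symmetric])
          then show ?thesis by (simp only: neg_equal_0_iff_equal)
        qed
        then have "u2 = 0" using pointed[OF s2 u(2) v(2)] by blast
        then show ?thesis using u \<open>u1 = 0\<close> by simp
      qed
    qed
    moreover have "0 \<in> qpos (\<sigma>1 \<union> \<sigma>2) \<inter> uminus ` qpos (\<sigma>1 \<union> \<sigma>2)"
      using z by (simp add: image_iff)
    ultimately show "strongly_convex (qpos (\<sigma>1 \<union> \<sigma>2))" unfolding strongly_convex_def by blast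
  qed
qed

end
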